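(* For every dimension $n\geq 2$ there exists $C>0$ such that for all $\alpha>C$, $$\mathbb{P}\big(R_\alpha^{c}\big)\leq \alpha^{-2n-1}.$$
   Context: $B(\cdot)$ is a standard Brownian motion in $\mathbb{R}^n$. Independently of $B$, let $\{(x_i,y_i)\}_{i\in\mathbb{N}}$ be a Poisson point process of intensity $1$ on $[0,1]\times[0,\infty)$, and for $\alpha\geq 0$ set $\Lambda_\alpha=\{x_i: y_i\leq\alpha\}\cup\{0,1\}$. Let $\phi(\alpha)=e^{\sqrt{\log\alpha}}$. For $a<b$ define $N_\alpha[a,b]=\{\forall t\in[a,b]:\ \Lambda_\alpha\cap[t-\alpha^{-1}\phi(\alpha),t+\alpha^{-1}\phi(\alpha)]\neq\emptyset\}$, $M_\delta[a,b]=\sup\{|B(t_1)-B(t_2)|: t_1,t_2\in[a,b],\ |t_1-t_2|\leq\delta\}$, $Y_\alpha[a,b]=\{M_\delta[a,b]\leq \delta^{1/2}\phi(\alpha)+\alpha^{-2n-1}\ \text{for all } \delta\leq b-a\}$, and $R_\alpha[a,b]=N_\alpha[a,b]\cap Y_\alpha[a,b]$, $R_\alpha=R_\alpha[0,1]$. $R_\alpha^c$ denotes the complement. *)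

theory Defs
  imports "HOL-Probability.Probability"
begin

definition std_brownian :: "'a measure \<Rightarrow> (real \<Rightarrow> 'a \<Rightarrow> real^'n) \<Rightarrow> bool" where
  "std_brownian M B \<longleftrightarrow>
     prob_space M \<and>
     (\<forall>t\<ge>0. B t \<in> borel_measurable M) \<and>
     (\<forall>\<omega>\<in>space M. B 0 \<omega> = 0 \<and> continuous_on {0..} (\<lambda>t. B t \<omega>)) \<and>
     (\<forall>s t. 0 \<le> s \<and> s < t \<longrightarrow>
        distr M lborel (\<lambda>\<omega>. B t \<omega> - B s \<omega>) =
        density lborel (\<lambda>x. ennreal (\<Prod>i\<in>UNIV. normal_density 0 (sqrt (t - s)) (x $ i)))) \<and>
     (\<forall>(ts::nat \<Rightarrow> real) k. 0 \<le> ts 0 \<and> (\<forall>i<k. ts i < ts (Suc i)) \<longrightarrow>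
        prob_space.indep_vars M (\<lambda>_. borel) (\<lambda>i \<omega>. B (ts (Suc i)) \<omega> - B (ts i) \<omega>) {..<k})"

definition pp_count :: "(nat \<Rightarrow> 'a \<Rightarrow> real \<times> real) \<Rightarrow> (real \<times> real) set \<Rightarrow> 'a \<Rightarrow> nat" where
  "pp_count X A \<omega> = card {i. X i \<omega> \<in> A}"

text \<open>Poisson point process of intensity 1 (Lebesgue measure) on [0,1] x [0,\<infinity>),
  given by an enumeration of its points (x_i, y_i) = X i.\<close>
definition poisson_pp :: "'a measure \<Rightarrow> (nat \<Rightarrow> 'a \<Rightarrow> real \<times> real) \<Rightarrow> bool" where
  "poisson_pp M X \<longleftrightarrow>
     prob_space M \<and>
     (\<forall>i. X i \<in> borel_measurable M) \<and>
     (\<forall>i. \<forall>\<omega>\<in>space M. X i \<omega> \<in> {0..1} \<times> {0..}) \<and>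
     (\<forall>A. A \<in> sets borel \<and> A \<subseteq> {0..1} \<times> {0..} \<and> emeasure lborel A < \<infinity> \<longrightarrow>
        (AE \<omega> in M. finite {i. X i \<omega> \<in> A}) \<and>
        (\<forall>k. measure M {\<omega>\<in>space M. pp_count X A \<omega> = k} =
              measure lborel A ^ k / fact k * exp (- measure lborel A))) \<and>
     (\<forall>(As :: nat \<Rightarrow> (real \<times> real) set) J. finite J \<and>
        (\<forall>j\<in>J. As j \<in> sets borel \<and> As j \<subseteq> {0..1} \<times> {0..} \<and> emeasure lborel (As j) < \<infinity>) \<and>
        disjoint_family_on As J \<longrightarrow>
        prob_space.indep_vars M (\<lambda>_. count_space UNIV) (\<lambda>j. pp_count X (As j)) J)"

definition bm_ppp :: "'a measure \<Rightarrow> (real \<Rightarrow> 'a \<Rightarrow> real^'n) \<Rightarrow> (nat \<Rightarrow> 'a \<Rightarrow> real \<times> real) \<Rightarrow> bool" where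
  "bm_ppp M B X \<longleftrightarrow> std_brownian M B \<and> poisson_pp M X \<and>
     prob_space.indep_set M
       {(\<lambda>\<omega>. restrict (\<lambda>t. B t \<omega>) {0..}) -` S \<inter> space M | S.
          S \<in> sets (Pi\<^sub>M {0..} (\<lambda>_::real. (borel :: (real^'n) measure)))}
       {(\<lambda>\<omega> i. X i \<omega>) -` S \<inter> space M | S.
          S \<in> sets (Pi\<^sub>M (UNIV::nat set) (\<lambda>_. (borel :: (real \<times> real) measure)))}"

definition phi :: "real \<Rightarrow> real" where
  "phi \<alpha> = exp (sqrt (ln \<alpha>))"

definition Lambda :: "(nat \<Rightarrow> 'a \<Rightarrow> real \<times> real) \<Rightarrow> real \<Rightarrow> 'a \<Rightarrow> real set" where
  "Lambda X \<alpha> \<omega> = {fst (X i \<omega>) | i. snd (X i \<omega>) \<le> \<alpha>} \<union> {0, 1}"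

definition N_ev :: "(nat \<Rightarrow> 'a \<Rightarrow> real \<times> real) \<Rightarrow> real \<Rightarrow> real \<Rightarrow> real \<Rightarrow> 'a \<Rightarrow> bool" where
  "N_ev X \<alpha> a b \<omega> \<longleftrightarrow>
     (\<forall>t\<in>{a..b}. Lambda X \<alpha> \<omega> \<inter> {t - phi \<alpha> / \<alpha> .. t + phi \<alpha> / \<alpha>} \<noteq> {})"

definition modulus :: "(real \<Rightarrow> 'a \<Rightarrow> real^'n) \<Rightarrow> real \<Rightarrow> real \<Rightarrow> real \<Rightarrow> 'a \<Rightarrow> real" where
  "modulus B \<delta> a b \<omega> =
     Sup {norm (B t1 \<omega> - B t2 \<omega>) | t1 t2. t1 \<in> {a..b} \<and> t2 \<in> {a..b} \<and> \<bar>t1 - t2\<bar> \<le> \<delta>}"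

definition Y_ev :: "(real \<Rightarrow> 'a \<Rightarrow> real^'n) \<Rightarrow> real \<Rightarrow> real \<Rightarrow> real \<Rightarrow> 'a \<Rightarrow> bool" where
  "Y_ev B \<alpha> a b \<omega> \<longleftrightarrow>
     (\<forall>\<delta>. 0 < \<delta> \<and> \<delta> \<le> b - a \<longrightarrow>
        modulus B \<delta> a b \<omega> \<le> sqrt \<delta> * phi \<alpha> + \<alpha> powr (- (2 * real CARD('n) + 1)))"

definition R_ev :: "(real \<Rightarrow> 'a \<Rightarrow> real^'n) \<Rightarrow> (nat \<Rightarrow> 'a \<Rightarrow> real \<times> real) \<Rightarrow> real \<Rightarrow> real \<Rightarrow> real \<Rightarrow> 'a \<Rightarrow> bool" where
  "R_ev B X \<alpha> a b \<omega> \<longleftrightarrow> N_ev X \<alpha> a b \<omega> \<and> Y_ev B \<alpha> a b \<omega>"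

end

theory Submission
  imports Defs "HOL-Real_Asymp.Real_Asymp"
begin

lemma nd_exp:
  fixes \<tau> y :: real assumes "\<tau> > 0"
  shows "normal_density 0 (sqrt \<tau>) y * exp (y^2/(4*\<tau>)) = sqrt 2 * normal_density 0 (sqrt (2*\<tau>)) y"
proof -
  have e: "exp (-(y^2) / (2*\<tau>)) * exp (y^2/(4*\<tau>)) = exp (-(y^2) / (2*(2*\<tau>)))"
    unfolding exp_add[symmetric] using assms by (simp add: field_simps)
  have s: "sqrt (2*pi*(2*\<tau>)) = sqrt 2 * sqrt (2*pi*\<tau>)"
    by (simp add: real_sqrt_mult[symmetric] mult_ac)
  have pos: "sqrt (2*pi*\<tau>) > 0" using assms by simp
  have s2: "sqrt (pi * (\<tau> * 4)) = sqrt 2 * sqrt (pi * (\<tau> * 2))"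
    by (subst real_sqrt_mult[symmetric]) (simp add: mult_ac)
  show ?thesis unfolding normal_density_def using assms
    apply (simp add: s)
    using e pos s2 by (simp add: field_simps)
qed

lemma prod_nd_exp:
  fixes \<tau> :: real and v :: "real^'n" assumes "\<tau> > 0"
  shows "(\<Prod>i\<in>UNIV. normal_density 0 (sqrt \<tau>) (v$i)) * exp ((\<Sum>i\<in>UNIV. (v$i)^2)/(4*\<tau>))
     = sqrt 2 ^ CARD('n) * (\<Prod>i\<in>UNIV. normal_density 0 (sqrt (2*\<tau>)) (v$i))"
proof -
  have "exp ((\<Sum>i\<in>UNIV. (v$i)^2)/(4*\<tau>)) = (\<Prod>i\<in>UNIV. exp ((v$i)^2/(4*\<tau>)))"
    by (simp add: sum_divide_distrib exp_sum)
  then have "(\<Prod>i\<in>UNIV. normal_density 0 (sqrt \<tau>) (v$i)) * exp ((\<Sum>i\<in>UNIV. (v$i)^2)/(4*\<tau>))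
     = (\<Prod>i\<in>UNIV. normal_density 0 (sqrt \<tau>) (v$i) * exp ((v$i)^2/(4*\<tau>)))"
    by (simp add: prod.distrib)
  also have "\<dots> = (\<Prod>i\<in>UNIV. sqrt 2 * normal_density 0 (sqrt (2*\<tau>)) (v$i))"
    using nd_exp[OF assms] by simp
  also have "\<dots> = sqrt 2 ^ CARD('n) * (\<Prod>i\<in>UNIV. normal_density 0 (sqrt (2*\<tau>)) (v$i))"
    by (simp add: prod.distrib)
  finally show ?thesis .
qed

lemma norm_sq_vec: "(norm (v::real^'n))^2 = (\<Sum>i\<in>UNIV. (v$i)^2)"
  unfolding norm_vec_def L2_set_def by (simp add: sum_nonneg)

lemma gauss_tail:
  fixes B :: "real \<Rightarrow> 'a \<Rightarrow> real^'n"
  assumes bm: "std_brownian M B" and st: "0 \<le> s" "s < t" and x: "0 \<le> x"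
  shows "{\<omega>\<in>space M. x < norm (B t \<omega> - B s \<omega>)} \<in> sets M \<and>
         measure M {\<omega>\<in>space M. x < norm (B t \<omega> - B s \<omega>)} \<le> sqrt 2 ^ CARD('n) * exp (-(x^2)/(4*(t-s)))"
proof -
  define \<tau> where "\<tau> = t - s"
  have tau: "\<tau> > 0" using st by (simp add: \<tau>_def)
  interpret P: prob_space M using bm by (simp add: std_brownian_def)
  have Bm: "\<And>t. t \<ge> 0 \<Longrightarrow> B t \<in> borel_measurable M" using bm by (simp add: std_brownian_def)
  have distr: "\<And>s t. 0 \<le> s \<Longrightarrow> s < t \<Longrightarrow> distr M lborel (\<lambda>\<omega>. B t \<omega> - B s \<omega>) =
        density lborel (\<lambda>x. ennreal (\<Prod>i\<in>UNIV. normal_density 0 (sqrt (t - s)) (x $ i)))"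
    using bm by (simp add: std_brownian_def)
  define D where "D = (\<lambda>\<omega>. B t \<omega> - B s \<omega>)"
  have Dm: "D \<in> borel_measurable M" unfolding D_def using Bm st by auto
  define S where "S = {v::real^'n. x < norm v}"
  have Sb: "S \<in> sets borel" unfolding S_def by measurable
  have eq: "{\<omega>\<in>space M. x < norm (B t \<omega> - B s \<omega>)} = D -` S \<inter> space M"
    by (auto simp: D_def S_def)
  have sets: "{\<omega>\<in>space M. x < norm (B t \<omega> - B s \<omega>)} \<in> sets M"
    unfolding eq using Dm Sb by (simp add: measurable_sets)
  define f where "f = (\<lambda>\<sigma> (v::real^'n). (\<Prod>i\<in>UNIV. normal_density 0 \<sigma> (v $ i)))"
  have fm: "\<And>\<sigma>. (\<lambda>v. ennreal (f \<sigma> v)) \<in> borel_measurable lborel"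
    unfolding f_def by measurable
  have int1: "(\<integral>\<^sup>+ v. ennreal (f (sqrt (2*\<tau>)) v) \<partial>lborel) = 1"
  proof -
    have "(\<integral>\<^sup>+ v. ennreal (f (sqrt (2*\<tau>)) v) \<partial>lborel)
        = emeasure (density lborel (\<lambda>v. ennreal (f (sqrt (2*\<tau>)) v))) UNIV"
      using fm by (simp add: emeasure_density)
    also have "\<dots> = emeasure (distr M lborel (\<lambda>\<omega>. B (2*\<tau>) \<omega> - B 0 \<omega>)) UNIV"
      using distr[of 0 "2*\<tau>"] tau by (simp add: f_def)
    also have "\<dots> = emeasure M (space M)"
      using Bm tau by (subst emeasure_distr) auto
    finally show ?thesis by (simp add: P.emeasure_space_1)
  qed
  define c where "c = sqrt 2 ^ CARD('n) * exp (-(x^2)/(4*\<tau>))"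
  have pw: "ennreal (f (sqrt \<tau>) v) * indicator S v \<le> ennreal c * ennreal (f (sqrt (2*\<tau>)) v)" for v
  proof (cases "v \<in> S")
    case True
    then have "x^2 \<le> (norm v)^2" unfolding S_def using x by (simp add: power_mono)
    then have "x^2 \<le> (\<Sum>i\<in>UNIV. (v$i)^2)" by (simp add: norm_sq_vec)
    then have "1 \<le> exp ((\<Sum>i\<in>UNIV. (v$i)^2)/(4*\<tau>)) * exp (-(x^2)/(4*\<tau>))"
      using tau by (simp add: exp_add[symmetric] field_simps)
    moreover have "f (sqrt \<tau>) v \<ge> 0" unfolding f_def by (simp add: prod_nonneg)
    ultimately have "f (sqrt \<tau>) v \<le> f (sqrt \<tau>) v * (exp ((\<Sum>i\<in>UNIV. (v$i)^2)/(4*\<tau>)) * exp (-(x^2)/(4*\<tau>)))"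
      by (metis mult_left_mono mult.right_neutral)
    also have "\<dots> = c * f (sqrt (2*\<tau>)) v"
      unfolding c_def f_def using prod_nd_exp[OF tau, of v] by (simp add: mult_ac)
    finally have "f (sqrt \<tau>) v \<le> c * f (sqrt (2*\<tau>)) v" .
    then show ?thesis using True
      by (simp add: ennreal_mult'[symmetric] c_def ennreal_leI)
  qed simp
  have "emeasure M {\<omega>\<in>space M. x < norm (B t \<omega> - B s \<omega>)} = emeasure (distr M lborel D) S"
    unfolding eq using Dm Sb by (subst emeasure_distr) auto
  also have "\<dots> = emeasure (density lborel (\<lambda>v. ennreal (f (sqrt \<tau>) v))) S"
    using distr[OF st] by (simp add: D_def f_def \<tau>_def)
  also have "\<dots> = (\<integral>\<^sup>+ v. ennreal (f (sqrt \<tau>) v) * indicator S v \<partial>lborel)"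
    using fm Sb by (simp add: emeasure_density)
  also have "\<dots> \<le> (\<integral>\<^sup>+ v. ennreal c * ennreal (f (sqrt (2*\<tau>)) v) \<partial>lborel)"
    by (rule nn_integral_mono) (rule pw)
  also have "\<dots> = ennreal c"
    using fm int1 by (simp add: nn_integral_cmult)
  finally have "emeasure M {\<omega>\<in>space M. x < norm (B t \<omega> - B s \<omega>)} \<le> ennreal c" .
  then have "measure M {\<omega>\<in>space M. x < norm (B t \<omega> - B s \<omega>)} \<le> c"
    using sets by (simp add: P.emeasure_eq_measure c_def)
  then show ?thesis using sets by (simp add: c_def \<tau>_def)
qed

lemma measure_box2:
  fixes a b c :: real assumes "a \<le> b" "0 \<le> c"
  shows "emeasure lborel ({a..b} \<times> {0..c}) = ennreal ((b-a)*c)"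
    and "measure lborel ({a..b} \<times> {0..c}) = (b-a)*c"
proof -
  have "emeasure (lborel :: (real \<times> real) measure) ({a..b} \<times> {0..c})
      = emeasure (lborel \<Otimes>\<^sub>M lborel) ({a..b} \<times> {0..c})"
    by (simp add: lborel_prod)
  also have "\<dots> = emeasure lborel {a..b} * emeasure lborel {0..c}"
    by (rule lborel.emeasure_pair_measure_Times) auto
  also have "\<dots> = ennreal ((b-a)*c)" using assms by (simp add: ennreal_mult)
  finally show e: "emeasure lborel ({a..b} \<times> {0..c}) = ennreal ((b-a)*c)" .
  then show "measure lborel ({a..b} \<times> {0..c}) = (b-a)*c"
    using assms by (simp add: measure_def)
qed

lemma pp_zero:
  assumes pp: "poisson_pp M X" and A: "A \<in> sets borel" "A \<subseteq> {0..1} \<times> {0..}" "emeasure lborel A < \<infinity>"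
  shows "{\<omega>\<in>space M. pp_count X A \<omega> = 0} \<in> sets M \<and>
         measure M {\<omega>\<in>space M. pp_count X A \<omega> = 0} = exp (- measure lborel A)"
proof -
  have m: "measure M {\<omega>\<in>space M. pp_count X A \<omega> = 0} = exp (- measure lborel A)"
  proof -
    have "\<forall>k. measure M {\<omega>\<in>space M. pp_count X A \<omega> = k} =
              measure lborel A ^ k / fact k * exp (- measure lborel A)"
      using pp A unfolding poisson_pp_def by blast
    then show ?thesis by (drule_tac x=0 in spec) simp
  qed
  moreover have "{\<omega>\<in>space M. pp_count X A \<omega> = 0} \<in> sets M"
  proof (rule ccontr)
    assume "{\<omega>\<in>space M. pp_count X A \<omega> = 0} \<notin> sets M"
    then have "measure M {\<omega>\<in>space M. pp_count X A \<omega> = 0} = 0" by (rule measure_notin_sets)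
    with m show False by simp
  qed
  ultimately show ?thesis by simp
qed

lemma N_part:
  fixes X :: "nat \<Rightarrow> 'a \<Rightarrow> real \<times> real"
  assumes pp: "poisson_pp M X" and al: "\<alpha> > 0" and m: "m \<ge> 1" and mh: "1 / real m \<le> phi \<alpha> / \<alpha>"
  shows "\<exists>E\<in>sets M. {\<omega>\<in>space M. \<not> N_ev X \<alpha> 0 1 \<omega>} \<subseteq> E \<and> measure M E \<le> real m * exp (- \<alpha> / real m)"
proof -
  interpret P: prob_space M using pp by (simp add: poisson_pp_def)
  define A where "A = (\<lambda>k::nat. {real k / real m .. (real k + 1) / real m} \<times> {0..\<alpha>})"
  have mpos: "real m > 0" using m by simp
  have Ak: "A k \<in> sets borel \<and> A k \<subseteq> {0..1} \<times> {0..} \<and> emeasure lborel (A k) < \<infinity> \<and>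
            measure lborel (A k) = \<alpha> / real m" if "k < m" for k
  proof -
    have le: "real k / real m \<le> (real k + 1) / real m" using mpos by (simp add: divide_right_mono)
    have "(real k + 1) / real m \<le> 1" using that mpos by (simp add: field_simps)
    moreover have z: "0 \<le> real k / real m" by simp
    ultimately have sub: "A k \<subseteq> {0..1} \<times> {0..}" unfolding A_def
      by auto (use z in linarith)
    have "(real k + 1) / real m - real k / real m = 1 / real m" by (simp add: diff_divide_distrib[symmetric])
    moreover have "A k \<in> sets borel" unfolding A_def by (intro borel_closed closed_Times) auto
    ultimately show ?thesis using measure_box2[OF le, of \<alpha>] al sub unfolding A_def by auto
  qed
  define E where "E = (\<Union>k\<in>{..<m}. {\<omega>\<in>space M. pp_count X (A k) \<omega> = 0})"
  have Esets: "E \<in> sets M" unfolding E_def using pp_zero[OF pp] Ak by (intro sets.finite_UN) auto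
  have "measure M E \<le> (\<Sum>k\<in>{..<m}. measure M {\<omega>\<in>space M. pp_count X (A k) \<omega> = 0})"
    unfolding E_def using pp_zero[OF pp] Ak by (intro P.finite_measure_subadditive_finite) auto
  also have "\<dots> = (\<Sum>k\<in>{..<m}. exp (- \<alpha> / real m))"
    using pp_zero[OF pp] Ak by (intro sum.cong) auto
  also have "\<dots> = real m * exp (- \<alpha> / real m)" by simp
  finally have mE: "measure M E \<le> real m * exp (- \<alpha> / real m)" .
  have cover: "N_ev X \<alpha> 0 1 \<omega>" if "\<omega> \<in> space M" "\<omega> \<notin> E" for \<omega>
    unfolding N_ev_def
  proof
    fix t :: real assume t: "t \<in> {0..1}"
    obtain k :: nat where k: "k < m" "real k \<le> t * real m" "t * real m \<le> real k + 1"
    proof (cases "t * real m < real m")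
      case True
      define k where "k = nat \<lfloor>t * real m\<rfloor>"
      have "0 \<le> t * real m" using t by simp
      then have "real k \<le> t * real m" "t * real m < real k + 1" unfolding k_def
        by (simp_all add: of_nat_nat floor_less_cancel)
      moreover have "k < m" using True \<open>real k \<le> t * real m\<close> by linarith
      ultimately show ?thesis using that by auto
    next
      case False
      then have "t = 1" using t mpos by auto
      then show ?thesis using that[of "m - 1"] m by (auto simp: of_nat_diff)
    qed
    have "pp_count X (A k) \<omega> \<noteq> 0" using that k(1) unfolding E_def by auto
    then have "{i. X i \<omega> \<in> A k} \<noteq> {}" unfolding pp_count_def by (metis card.empty)
    then obtain i where i: "X i \<omega> \<in> A k" by auto
    let ?p = "fst (X i \<omega>)"
    have p1: "real k / real m \<le> ?p" "?p \<le> (real k + 1) / real m" "snd (X i \<omega>) \<le> \<alpha>"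
      using i unfolding A_def by (auto simp: mem_Times_iff)
    have "?p \<in> Lambda X \<alpha> \<omega>" unfolding Lambda_def using p1(3) by blast
    moreover have "real k / real m \<le> t" "t \<le> (real k + 1) / real m"
      using k mpos by (simp_all add: field_simps)
    then have "\<bar>t - ?p\<bar> \<le> 1 / real m" using p1 mpos by (simp add: abs_le_iff field_simps)
    then have "?p \<in> {t - phi \<alpha> / \<alpha> .. t + phi \<alpha> / \<alpha>}" using mh by (auto simp: abs_le_iff)
    ultimately show "Lambda X \<alpha> \<omega> \<inter> {t - phi \<alpha> / \<alpha> .. t + phi \<alpha> / \<alpha>} \<noteq> {}" by blast
  qed
  show ?thesis using Esets mE cover by blast
qed

definition pgrid :: "nat \<Rightarrow> real \<Rightarrow> real" where
  "pgrid j t = real (nat \<lfloor>2^j * t\<rfloor>) / 2^j"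

lemma floor_bounds_nat:
  assumes "0 \<le> x" shows "real (nat \<lfloor>x\<rfloor>) \<le> x" "x < real (nat \<lfloor>x\<rfloor>) + 1"
  using assms by (simp_all add: of_nat_nat)

lemma pgrid_props:
  assumes t: "t \<in> {0..1}"
  shows "nat \<lfloor>2^j * t\<rfloor> \<le> 2^j" "pgrid j t \<in> {0..1}" "t - 1/2^j \<le> pgrid j t" "pgrid j t \<le> t"
proof -
  have x0: "0 \<le> (2::real)^j * t" using t by simp
  have "(2::real)^j * t \<le> 2^j" using t by simp
  then have "\<lfloor>(2::real)^j * t\<rfloor> \<le> 2^j" by (metis floor_mono floor_of_nat of_nat_numeral of_nat_power)
  then show k: "nat \<lfloor>2^j * t\<rfloor> \<le> 2^j" by (simp add: nat_le_iff)
  have a: "real (nat \<lfloor>2^j * t\<rfloor>) \<le> 2^j * t" "2^j * t < real (nat \<lfloor>2^j * t\<rfloor>) + 1"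
    using floor_bounds_nat[OF x0] by auto
  have "real (nat \<lfloor>2^j * t\<rfloor>) \<le> 2^j" using k by (metis of_nat_le_iff of_nat_numeral of_nat_power)
  then show "pgrid j t \<in> {0..1}" unfolding pgrid_def by (simp add: field_simps)
  have "(2^j * t - 1) / 2^j \<le> real (nat \<lfloor>2^j * t\<rfloor>) / 2^j"
    using a(2) by (intro divide_right_mono) auto
  moreover have "(2^j * t - 1) / 2^j = t - 1/(2::real)^j" by (simp add: field_simps)
  ultimately show "t - 1/2^j \<le> pgrid j t" unfolding pgrid_def by simp
  show "pgrid j t \<le> t" using a unfolding pgrid_def by (simp add: field_simps)
qed

lemma floor_double: "\<lfloor>2 * (x::real)\<rfloor> = 2 * \<lfloor>x\<rfloor> \<or> \<lfloor>2 * x\<rfloor> = 2 * \<lfloor>x\<rfloor> + 1"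
proof -
  have "2 * \<lfloor>x\<rfloor> \<le> \<lfloor>2 * x\<rfloor>" by (simp add: le_floor_iff)
  moreover have "\<lfloor>2 * x\<rfloor> < 2 * \<lfloor>x\<rfloor> + 2"
    by (simp add: floor_less_iff) linarith
  ultimately show ?thesis by linarith
qed

lemma chain_step:
  fixes g :: "real \<Rightarrow> 'b::real_normed_vector"
  assumes inc: "\<And>j k. k < 2^j \<Longrightarrow> norm (g ((real k + 1) / 2^j) - g (real k / 2^j)) \<le> a j"
    and a0: "\<And>j. 0 \<le> a j" and t: "t \<in> {0..1}"
  shows "norm (g (pgrid (Suc j) t) - g (pgrid j t)) \<le> a (Suc j)"
proof -
  define k where "k = nat \<lfloor>2^j * t\<rfloor>"
  define k' where "k' = nat \<lfloor>2^Suc j * t\<rfloor>"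
  have x0: "0 \<le> (2::real)^j * t" using t by simp
  have "k' = 2 * k \<or> k' = 2 * k + 1"
    using floor_double[of "2^j * t"] x0 unfolding k_def k'_def by (auto simp: mult.assoc nat_mult_distrib nat_add_distrib)
  moreover have k'le: "k' \<le> 2 ^ Suc j" unfolding k'_def using pgrid_props(1)[OF t] by blast
  ultimately consider "k' = 2 * k" | "k' = 2 * k + 1" "2 * k < 2 ^ Suc j" by fastforce
  then show ?thesis
  proof cases
    case 1
    then have "pgrid (Suc j) t = pgrid j t" unfolding pgrid_def k_def[symmetric] k'_def[symmetric]
      by (simp add: field_simps)
    then show ?thesis using a0 by simp
  next
    case 2
    have "pgrid (Suc j) t = (real (2*k) + 1) / 2 ^ Suc j" unfolding pgrid_def k'_def[symmetric] 2 by simp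
    moreover have "pgrid j t = real (2*k) / 2 ^ Suc j" unfolding pgrid_def k_def[symmetric] by (simp add: field_simps)
    ultimately show ?thesis using inc[OF 2(2)] by simp
  qed
qed

lemma chain_tele:
  fixes g :: "real \<Rightarrow> 'b::real_normed_vector"
  assumes inc: "\<And>j k. k < 2^j \<Longrightarrow> norm (g ((real k + 1) / 2^j) - g (real k / 2^j)) \<le> A * \<rho>^j"
    and A: "0 \<le> A" and r: "0 \<le> \<rho>" "\<rho> < 1" and t: "t \<in> {0..1}" and m: "J \<le> m"
  shows "norm (g (pgrid m t) - g (pgrid J t)) \<le> A * (\<rho>^(Suc J) - \<rho>^(Suc m)) / (1 - \<rho>)"
  using m
proof (induction m rule: dec_induct)
  case base then show ?case by simp
next
  case (step m)
  have "norm (g (pgrid (Suc m) t) - g (pgrid J t))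
      \<le> norm (g (pgrid (Suc m) t) - g (pgrid m t)) + norm (g (pgrid m t) - g (pgrid J t))"
    using norm_triangle_ineq[of "g (pgrid (Suc m) t) - g (pgrid m t)" "g (pgrid m t) - g (pgrid J t)"] by simp
  also have "\<dots> \<le> A * \<rho>^(Suc m) + A * (\<rho>^(Suc J) - \<rho>^(Suc m)) / (1 - \<rho>)"
    by (intro add_mono step.IH chain_step[where a="\<lambda>j. A * \<rho>^j"] inc t) (use A r in \<open>auto intro: mult_nonneg_nonneg\<close>)
  also have "\<dots> = A * (\<rho>^(Suc J) - \<rho>^(Suc (Suc m))) / (1 - \<rho>)"
    using r by (simp add: field_simps)
  finally show ?case .
qed

lemma aux_alg: "(x::real) \<noteq> 0 \<Longrightarrow> q*r/x + q + q*r/x = q*(2*r + x)/x"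
  by (simp add: field_simps)

lemma chain_main:
  fixes g :: "real \<Rightarrow> 'b::real_normed_vector"
  assumes inc: "\<And>j k. k < 2^j \<Longrightarrow> norm (g ((real k + 1) / 2^j) - g (real k / 2^j)) \<le> A * \<rho>^j"
    and A: "0 \<le> A" and r: "0 \<le> \<rho>" "\<rho> < 1" and cont: "continuous_on {0..1} g"
    and s: "s \<in> {0..1}" and t: "t \<in> {0..1}" and st: "\<bar>s - t\<bar> \<le> 1/2^J"
  shows "norm (g s - g t) \<le> A * \<rho>^J * (1 + \<rho>) / (1 - \<rho>)"
proof -
  have lim: "norm (g t - g (pgrid J t)) \<le> A * \<rho>^(Suc J) / (1 - \<rho>)" if t: "t \<in> {0..1}" for t
  proof -
    have "(\<lambda>m. pgrid m t) \<longlonglongrightarrow> t"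
    proof (rule tendsto_sandwich[where f="\<lambda>m. t - (1/2)^m" and h="\<lambda>m. t"])
      show "\<forall>\<^sub>F n in sequentially. t - (1/2)^n \<le> pgrid n t"
        using pgrid_props(3)[OF t] by (simp add: power_one_over)
      show "\<forall>\<^sub>F n in sequentially. pgrid n t \<le> t" using pgrid_props(4)[OF t] by simp
      have "(\<lambda>m. (1/2::real)^m) \<longlonglongrightarrow> 0" by (rule LIMSEQ_power_zero) simp
      from tendsto_diff[OF tendsto_const this, of t]
      show "(\<lambda>m. t - (1/2)^m) \<longlonglongrightarrow> t" by simp
    qed simp
    then have "(\<lambda>m. g (pgrid m t)) \<longlonglongrightarrow> g t"
      by (rule continuous_on_tendsto_compose[OF cont]) (use t pgrid_props(2)[OF t] in auto)
    then have "(\<lambda>m. norm (g (pgrid m t) - g (pgrid J t))) \<longlonglongrightarrow> norm (g t - g (pgrid J t))"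
      by (intro tendsto_intros)
    then show ?thesis
    proof (rule Lim_bounded[where M=J], intro allI impI)
      fix m :: nat assume "J \<le> m"
      have "norm (g (pgrid m t) - g (pgrid J t)) \<le> A * (\<rho>^(Suc J) - \<rho>^(Suc m)) / (1 - \<rho>)"
        by (rule chain_tele[OF inc A r t \<open>J \<le> m\<close>])
      also have "\<dots> \<le> A * \<rho>^(Suc J) / (1 - \<rho>)"
        using A r by (intro divide_right_mono mult_left_mono) auto
      finally show "norm (g (pgrid m t) - g (pgrid J t)) \<le> A * \<rho>^(Suc J) / (1 - \<rho>)" .
    qed
  qed
  have mid: "norm (g (pgrid J s) - g (pgrid J t)) \<le> A * \<rho>^J"
  proof -
    define ks where "ks = nat \<lfloor>2^J * s\<rfloor>"
    define kt where "kt = nat \<lfloor>2^J * t\<rfloor>"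
    have "\<bar>2^J * s - 2^J * t\<bar> = 2^J * \<bar>s - t\<bar>"
      by (simp add: abs_mult flip: right_diff_distrib)
    also have "\<dots> \<le> (1::real)" using st by (simp add: field_simps)
    finally have "\<bar>2^J * s - 2^J * t\<bar> \<le> (1::real)" .
    moreover have "0 \<le> (2::real)^J * s" "0 \<le> (2::real)^J * t" using s t by auto
    ultimately have "ks \<le> kt + 1" "kt \<le> ks + 1"
      unfolding ks_def kt_def by (simp_all add: abs_le_iff) linarith+
    then consider "ks = kt" | "ks = kt + 1" | "kt = ks + 1" by linarith
    then show ?thesis
    proof cases
      case 1 then show ?thesis using A r unfolding pgrid_def ks_def kt_def by simp
    next
      case 2
      have "ks \<le> 2^J" using pgrid_props(1)[OF s, of J] unfolding ks_def .
      then have "kt < 2^J" using 2 by simp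
      then show ?thesis using inc[of kt J] 2 unfolding pgrid_def ks_def[symmetric] kt_def[symmetric] by (simp add: add.commute)
    next
      case 3
      have "kt \<le> 2^J" using pgrid_props(1)[OF t, of J] unfolding kt_def .
      then have "ks < 2^J" using 3 by simp
      then show ?thesis using inc[of ks J] 3 unfolding pgrid_def ks_def[symmetric] kt_def[symmetric]
        by (simp add: norm_minus_commute add.commute)
    qed
  qed
  have "norm (g s - g t) \<le> norm (g s - g (pgrid J s)) + norm (g (pgrid J s) - g (pgrid J t)) + norm (g (pgrid J t) - g t)"
  proof -
    have e: "g s - g t = (g s - g (pgrid J s)) + (g (pgrid J s) - g (pgrid J t)) + (g (pgrid J t) - g t)"
      by simp
    show ?thesis unfolding e by (intro norm_triangle_le add_mono order_refl norm_triangle_ineq)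
  qed
  also have "\<dots> \<le> A * \<rho>^(Suc J) / (1 - \<rho>) + A * \<rho>^J + A * \<rho>^(Suc J) / (1 - \<rho>)"
    using lim[OF s] lim[OF t] mid by (intro add_mono) (auto simp: norm_minus_commute)
  also have "\<dots> = A * \<rho>^J * (1 + \<rho>) / (1 - \<rho>)"
  proof -
    have d: "1 - \<rho> \<noteq> 0" using r by simp
    have "A * \<rho>^(Suc J) = (A * \<rho>^J) * \<rho>" by (simp add: mult_ac)
    then show ?thesis using aux_alg[OF d, of "A * \<rho>^J" \<rho>] by simp
  qed
  finally show ?thesis .
qed

lemma exists_dyadic_J:
  assumes "0 < (\<delta>::real)" "\<delta> \<le> 1"
  shows "\<exists>J. 1/2^(Suc J) < \<delta> \<and> \<delta> \<le> 1/2^J"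
proof -
  obtain N where N: "(1/2::real)^N < \<delta>" using real_arch_pow_inv[of \<delta> "1/2"] assms by auto
  define P where "P = (\<lambda>j. (1/2::real)^j < \<delta>)"
  have PN: "P N" using N by (simp add: P_def)
  define i where "i = (LEAST j. P j)"
  have Pi: "P i" unfolding i_def by (rule LeastI[of P N, OF PN])
  have "i \<noteq> 0"
  proof
    assume "i = 0"
    then have "1 < \<delta>" using Pi by (simp add: P_def)
    with assms show False by simp
  qed
  then obtain J where iJ: "i = Suc J" by (cases i) auto
  have "\<not> P J" using not_less_Least[of J P] iJ unfolding i_def by simp
  then show ?thesis using Pi iJ by (auto simp: P_def power_one_over not_less)
qed

lemma exp3_le: "exp (3::real) \<le> 21"
proof -
  have "exp (3::real) = exp 1 ^ 3" by (simp flip: exp_of_nat_mult)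
  also have "\<dots> \<le> (272/100)^3" using e_less_272 by (intro power_mono) auto
  also have "\<dots> \<le> 21" by (simp add: power_divide)
  finally show ?thesis .
qed

lemma e_ge: "exp (1::real) \<ge> 8/3"
proof -
  have "5837465777 / 2147483648 - inverse (2 ^ 32) \<le> exp (1::real)"
    using e_approx_32 unfolding abs_le_iff by linarith
  then show ?thesis by simp
qed

lemma one_plus_pow_le_exp: "(0::real) \<le> x \<Longrightarrow> (1 + x)^J \<le> exp (real J * x)"
proof -
  assume "0 \<le> x"
  then have "(1 + x)^J \<le> exp x ^ J" by (intro power_mono) (auto simp: exp_ge_add_one_self add.commute)
  then show ?thesis by (simp flip: exp_of_nat_mult)
qed

lemma Y_part:
  fixes B :: "real \<Rightarrow> 'a \<Rightarrow> real^'n" and \<alpha> :: real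
  assumes bm: "std_brownian M B"
    and a1: "exp 1 \<le> \<alpha>" and a2: "8 * sqrt 2 ^ CARD('n) \<le> \<alpha>"
    and a3: "16800 * ((2 * real CARD('n) + 2) * ln \<alpha>) \<le> (phi \<alpha>)^2"
    and a4: "8400 * ((2 * real CARD('n) + 2) * ln \<alpha>) \<le> \<alpha>^2"
  shows "\<exists>E\<in>sets M. {\<omega>\<in>space M. \<not> Y_ev B \<alpha> 0 1 \<omega>} \<subseteq> E \<and>
            measure M E \<le> \<alpha> powr (- (2 * real CARD('n) + 1)) / 2"
proof -
  interpret P: prob_space M using bm by (simp add: std_brownian_def)
  define nn where "nn = real CARD('n)"
  have nn1: "nn \<ge> 1" unfolding nn_def by simp
  have apos: "\<alpha> > 0" using a1 by (meson exp_gt_zero less_le_trans)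
  define l where "l = ln \<alpha>"
  have l1: "l \<ge> 1" unfolding l_def using a1 apos by (metis ln_exp ln_le_cancel_iff exp_gt_zero)
  define L where "L = (2 * nn + 2) * l"
  have "4 * 1 \<le> (2 * nn + 2) * l" by (rule mult_mono) (use nn1 l1 in auto)
  then have L4: "L \<ge> 4" unfolding L_def by simp
  have L0: "L > 0" "L \<ge> 0" using L4 by simp_all
  define \<epsilon> where "\<epsilon> = \<alpha> powr (- (2 * nn + 1))"
  have eps: "\<epsilon> = exp (- (2 * nn + 1) * l)" unfolding \<epsilon>_def l_def powr_def using apos by simp
  define q where "q = (1 + 1/L) / 2"
  define \<rho> where "\<rho> = sqrt q"
  define Aa where "Aa = 2 * sqrt L"
  define a where "a = (\<lambda>j::nat. Aa * \<rho>^j)"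
  have q0: "0 < q" "q \<le> 5/8" using L4 unfolding q_def by (auto simp: field_simps)
  have r0: "0 \<le> \<rho>" "\<rho> \<le> 9/11" "\<rho> < 1"
  proof -
    show "0 \<le> \<rho>" unfolding \<rho>_def using q0(1) by simp
    have "\<rho> \<le> sqrt (81/121)" unfolding \<rho>_def using q0 by (intro real_sqrt_le_mono) simp
    also have "sqrt (81/121) = (9/11::real)" by (simp add: real_sqrt_divide)
    finally show "\<rho> \<le> 9/11" .
    then show "\<rho> < 1" by simp
  qed
  have rq: "\<rho>^2 = q" unfolding \<rho>_def using q0 by simp
  have Aa0: "Aa \<ge> 0" unfolding Aa_def using L0 by simp
  have Aa2: "Aa^2 = 4 * L" unfolding Aa_def using L0 by (simp add: power_mult_distrib)
  have a2sq: "(a j)^2 = 4 * L * q^j" for j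
    unfolding a_def by (simp add: power_mult_distrib Aa2 flip: rq power_mult) (simp add: mult.commute power_mult)
  have a0: "a j \<ge> 0" for j unfolding a_def using Aa0 r0 by simp
  define F where "F = (\<lambda>j (k::nat). {\<omega>\<in>space M. a j < norm (B ((real k + 1) / 2^j) \<omega> - B (real k / 2^j) \<omega>)})"
  define c where "c = sqrt 2 ^ CARD('n) * exp (- L)"
  have c0: "c \<ge> 0" unfolding c_def by simp
  have Fjk: "F j k \<in> sets M \<and> measure M (F j k) \<le> c * (1 / exp 1)^j" if "k < 2^j" for j k
  proof -
    have st: "0 \<le> real k / 2^j" "real k / 2^j < (real k + 1) / 2^j" by (auto simp: divide_strict_right_mono)
    have ts: "(real k + 1) / 2^j - real k / 2^j = 1 / 2^j" by (simp add: diff_divide_distrib[symmetric])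
    from gauss_tail[OF bm st a0[of j]]
    have g: "F j k \<in> sets M" "measure M (F j k) \<le> sqrt 2 ^ CARD('n) * exp (- ((a j)^2) / (4 * (1/2^j)))"
      unfolding F_def ts by auto
    have "(a j)^2 / (4 * (1/2^j)) = L * (2 * q)^j"
      by (simp add: a2sq power_mult_distrib field_simps)
    also have "2 * q = 1 + 1/L" unfolding q_def by simp
    finally have e1: "(a j)^2 / (4 * (1/2^j)) = L * (1 + 1/L)^j" .
    have e2: "L * (1 + 1/L)^j \<ge> L * (1 + real j * (1/L))"
    proof -
      have "0 \<le> 1/L" using L0 by simp
      then have "-1 \<le> 1/L" by linarith
      then show ?thesis using L0 by (intro mult_left_mono Bernoulli_inequality) auto
    qed
    have e3: "L * (1 + real j * (1/L)) = L + real j" using L0 by (simp add: field_simps)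
    have "L + real j \<le> (a j)^2 / (4 * (1/2^j))" using e1 e2 e3 by simp
    then have "exp (- ((a j)^2) / (4 * (1/2^j))) \<le> exp (- L - real j)" by simp
    also have "\<dots> = exp (- L) * (1 / exp 1)^j"
      by (simp add: exp_diff exp_minus field_simps flip: exp_of_nat_mult)
    finally have h: "sqrt 2 ^ CARD('n) * exp (- ((a j)^2) / (4 * (1/2^j))) \<le> sqrt 2 ^ CARD('n) * (exp (- L) * (1 / exp 1)^j)"
      by (intro mult_left_mono) auto
    show ?thesis using g(1) order_trans[OF g(2) h] unfolding c_def by (simp add: mult.assoc)
  qed
  define FF where "FF = (\<lambda>j. \<Union>k\<in>{..<2^j}. F j k)"
  have FFs: "FF j \<in> sets M" for j unfolding FF_def using Fjk by (intro sets.finite_UN) auto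
  have FFm: "measure M (FF j) \<le> c * (2 / exp 1)^j" for j
  proof -
    have "measure M (FF j) \<le> (\<Sum>k\<in>{..<2^j}. measure M (F j k))"
      unfolding FF_def using Fjk by (intro P.finite_measure_subadditive_finite) auto
    also have "\<dots> \<le> (\<Sum>k\<in>{..<(2::nat)^j}. c * (1 / exp 1)^j)"
      using Fjk by (intro sum_mono) auto
    also have "\<dots> = c * (2 / exp 1)^j" by (simp add: power_divide)
    finally show ?thesis .
  qed
  define E where "E = (\<Union>j. FF j)"
  have Es: "E \<in> sets M" unfolding E_def using FFs by auto
  have ge: "summable (\<lambda>j. c * (2 / exp 1)^j)"
    using e_ge by (intro summable_mult summable_geometric) auto
  have sm: "summable (\<lambda>j. measure M (FF j))"
    by (rule summable_comparison_test'[OF ge, of 0]) (use FFm in auto)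
  have "measure M E \<le> (\<Sum>j. measure M (FF j))"
    unfolding E_def using FFs sm by (intro P.finite_measure_subadditive_countably) auto
  also have "\<dots> \<le> (\<Sum>j. c * (2 / exp 1)^j)"
    using sm ge FFm by (intro suminf_le) auto
  also have "\<dots> = c * (1 / (1 - 2 / exp 1))"
    using e_ge by (simp add: suminf_mult suminf_geometric)
  also have "\<dots> \<le> c * 4"
  proof -
    have "1 / (1 - 2 / exp 1) \<le> (4::real)" using e_ge by (simp add: field_simps)
    then show ?thesis using c0 by (intro mult_left_mono) auto
  qed
  also have "\<dots> \<le> \<epsilon> / 2"
  proof -
    have "c * 4 = 4 * sqrt 2 ^ CARD('n) * exp (- L)" unfolding c_def by simp
    also have "\<dots> \<le> (\<alpha> / 2) * exp (- L)" using a2 by (intro mult_right_mono) auto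
    also have "\<dots> = exp (l - L) / 2" unfolding l_def using apos by (simp add: exp_diff exp_minus field_simps)
    also have "exp (l - L) = \<epsilon>" unfolding eps L_def by (simp add: algebra_simps)
    finally show ?thesis .
  qed
  finally have mE: "measure M E \<le> \<epsilon> / 2" .
  have cover: "Y_ev B \<alpha> 0 1 \<omega>" if \<omega>: "\<omega> \<in> space M" "\<omega> \<notin> E" for \<omega>
  proof -
    have inc: "norm (B ((real k + 1) / 2^j) \<omega> - B (real k / 2^j) \<omega>) \<le> Aa * \<rho>^j" if "k < 2^j" for j k
      using \<omega> that unfolding E_def FF_def F_def a_def by (auto simp: not_less)
    have cont: "continuous_on {0..1} (\<lambda>t. B t \<omega>)"
      using bm \<omega>(1) unfolding std_brownian_def by (auto intro: continuous_on_subset)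
    show ?thesis unfolding Y_ev_def
    proof (intro allI impI)
      fix \<delta> :: real assume d: "0 < \<delta> \<and> \<delta> \<le> 1 - 0"
      obtain J where J: "1/2^(Suc J) < \<delta>" "\<delta> \<le> 1/2^J" using exists_dyadic_J[of \<delta>] d by auto
      have ratio: "(1 + \<rho>) / (1 - \<rho>) \<le> 10" using r0 by (simp add: field_simps)
      have K: "norm (B s \<omega> - B t \<omega>) \<le> 10 * Aa * \<rho>^J"
        if "s \<in> {0..1}" "t \<in> {0..1}" "\<bar>s - t\<bar> \<le> \<delta>" for s t
      proof -
        have "norm (B s \<omega> - B t \<omega>) \<le> Aa * \<rho>^J * (1 + \<rho>) / (1 - \<rho>)"
          using chain_main[where g="\<lambda>t. B t \<omega>", OF inc Aa0 r0(1) r0(3) cont that(1,2)] that(3) J(2)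
          by simp
        also have "\<dots> = (Aa * \<rho>^J) * ((1 + \<rho>) / (1 - \<rho>))" by simp
        also have "\<dots> \<le> (Aa * \<rho>^J) * 10" using ratio Aa0 r0 by (intro mult_left_mono) auto
        finally show ?thesis by simp
      qed
      have key: "10 * Aa * \<rho>^J \<le> sqrt \<delta> * phi \<alpha> + \<alpha> powr (- (2 * real CARD('n) + 1))"
      proof -
        have eps0: "\<epsilon> \<ge> 0" unfolding eps by simp
        have ph0: "phi \<alpha> \<ge> 0" unfolding phi_def by simp
        have sd0: "sqrt \<delta> * phi \<alpha> \<ge> 0" using d ph0 by simp
        have rJ: "(\<rho>^J)^2 = q^J" unfolding rq[symmetric] by (simp add: power_mult[symmetric] mult.commute)
        have sq: "(10 * Aa * \<rho>^J)^2 = 400 * L * ((1 + 1/L)^J / 2^J)"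
          unfolding power_mult_distrib Aa2 rJ q_def by (simp add: power_divide)
        have bJ: "(1 + 1/L)^J \<le> exp (real J * (1/L))" using one_plus_pow_le_exp[of "1/L" J] L0 by simp
        have a3': "16800 * L \<le> (phi \<alpha>)^2" using a3 unfolding L_def nn_def l_def .
        have a4': "8400 * L \<le> \<alpha>^2" using a4 unfolding L_def nn_def l_def .
        have L2: "0 \<le> 400 * L" using L0 by simp
        consider "real J \<le> 3 * L" | "3 * L < real J" by linarith
        then show ?thesis
        proof cases
          case 1
          have "real J * (1/L) \<le> 3" using 1 L0 by (simp add: field_simps)
          then have "exp (real J * (1/L)) \<le> exp 3" by simp
          then have b21: "(1 + 1/L)^J \<le> 21" using bJ exp3_le by linarith
          have "(10 * Aa * \<rho>^J)^2 \<le> 400 * L * (21 / 2^J)"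
            unfolding sq using b21 L2 by (intro mult_left_mono divide_right_mono) auto
          also have "\<dots> = (16800 * L) / (2 * 2^J)" by simp
          also have "\<dots> \<le> (phi \<alpha>)^2 / (2 * 2^J)" using a3' by (intro divide_right_mono) auto
          also have "\<dots> = (sqrt (1/2^(Suc J)) * phi \<alpha>)^2" by (simp add: power_mult_distrib)
          also have "\<dots> \<le> (sqrt \<delta> * phi \<alpha>)^2"
            using J(1) ph0 by (intro power_mono mult_right_mono real_sqrt_le_mono) auto
          finally have "10 * Aa * \<rho>^J \<le> sqrt \<delta> * phi \<alpha>"
            using sd0 by (rule power2_le_imp_le)
          then show ?thesis using eps0 unfolding \<epsilon>_def nn_def by linarith
        next
          case 2
          have p2: "(2::real)^J = exp (real J * ln 2)" by (subst exp_of_nat_mult) simp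
          have ln2: "2/3 \<le> ln (2::real)" by (rule ln2_ge_two_thirds)
          have "1/L \<le> 1/4" using L4 by (simp add: field_simps)
          then have neg: "1/L - ln 2 \<le> 0" using ln2 by linarith
          have "real J * (1/L - ln 2) \<le> (3 * L) * (1/L - ln 2)"
            using 2 neg by (intro mult_right_mono_neg) auto
          also have "\<dots> = 3 - 3 * L * ln 2" using L0 by (simp add: field_simps)
          also have "\<dots> \<le> 3 - 2 * L" using ln2 L0 by (simp add: field_simps) 
          finally have ex: "real J * (1/L) - real J * ln 2 \<le> 3 - 2 * L" by (simp add: algebra_simps)
          have "(1 + 1/L)^J / 2^J \<le> exp (real J * (1/L)) / exp (real J * ln 2)"
            unfolding p2 using bJ by (intro divide_right_mono) auto
          also have "\<dots> = exp (real J * (1/L) - real J * ln 2)" by (simp add: exp_diff)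
          also have "\<dots> \<le> exp (3 - 2 * L)" using ex by simp
          also have "\<dots> = exp 3 * exp (- 2 * L)" by (simp add: exp_add[symmetric])
          also have "\<dots> \<le> 21 * exp (- 2 * L)" using exp3_le by (intro mult_right_mono) auto
          finally have b: "(1 + 1/L)^J / 2^J \<le> 21 * exp (- 2 * L)" .
          have "(10 * Aa * \<rho>^J)^2 \<le> 400 * L * (21 * exp (- 2 * L))"
            unfolding sq using b L2 by (intro mult_left_mono) auto
          also have "\<dots> = (8400 * L) * exp (- 2 * L)" by simp
          also have "\<dots> \<le> \<alpha>^2 * exp (- 2 * L)" using a4' by (intro mult_right_mono) auto
          also have "\<alpha>^2 = exp (2 * l)" unfolding l_def using apos by (subst exp_of_nat_mult[of 2, simplified]) simp
          also have "exp (2 * l) * exp (- 2 * L) = \<epsilon>^2"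
            unfolding eps L_def by (simp flip: exp_add exp_of_nat_mult add: algebra_simps)
          finally have "10 * Aa * \<rho>^J \<le> \<epsilon>" using eps0 by (rule power2_le_imp_le)
          then show ?thesis using sd0 unfolding \<epsilon>_def nn_def by linarith
        qed
      qed
      have "modulus B \<delta> 0 1 \<omega> \<le> 10 * Aa * \<rho>^J"
        unfolding modulus_def
      proof (rule cSup_least)
        show "{norm (B t1 \<omega> - B t2 \<omega>) |t1 t2. t1 \<in> {0..1} \<and> t2 \<in> {0..1} \<and> \<bar>t1 - t2\<bar> \<le> \<delta>} \<noteq> {}"
          using d by force
      qed (use K in auto)
      then show "modulus B \<delta> 0 1 \<omega> \<le> sqrt \<delta> * phi \<alpha> + \<alpha> powr (- (2 * real CARD('n) + 1))"
        using key by linarith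
    qed
  qed
  show ?thesis using Es mE cover unfolding \<epsilon>_def nn_def by blast
qed

lemma asym:
  fixes nn :: real and n :: nat assumes nn: "nn \<ge> 1"
  shows "\<exists>N. \<forall>x\<ge>N. 8 * sqrt 2 ^ n \<le> x \<and> exp 1 \<le> x \<and>
           ln 4 + (2 * nn + 2) * ln x \<le> phi x / 2 \<and>
           16800 * ((2 * nn + 2) * ln x) \<le> (phi x)^2 \<and>
           8400 * ((2 * nn + 2) * ln x) \<le> x^2"
proof -
  have o1: "(\<lambda>x::real. ln x) \<in> o(\<lambda>x. exp (sqrt (ln x)))" by real_asymp
  have o2: "(\<lambda>x::real. ln x) \<in> o(\<lambda>x. x^2)" by real_asymp
  define c1 where "c1 = 1 / (16800 * (2 * nn + 4))"
  define c2 where "c2 = 1 / (8400 * (2 * nn + 2))"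
  have c1p: "c1 > 0" "c2 > 0" unfolding c1_def c2_def using nn by auto
  have ev: "eventually (\<lambda>x. 8 * sqrt 2 ^ n \<le> x \<and> exp 1 \<le> x \<and>
      norm (ln x) \<le> c1 * norm (exp (sqrt (ln x))) \<and> norm (ln x) \<le> c2 * norm (x^2)) at_top"
    by (intro eventually_conj eventually_ge_at_top landau_o.smallD[OF o1 c1p(1)] landau_o.smallD[OF o2 c1p(2)])
  then obtain N where N: "\<And>x. x \<ge> N \<Longrightarrow> 8 * sqrt 2 ^ n \<le> x \<and> exp 1 \<le> x \<and>
      norm (ln x) \<le> c1 * norm (exp (sqrt (ln x))) \<and> norm (ln x) \<le> c2 * norm (x^2)"
    unfolding eventually_at_top_linorder by blast
  show ?thesis
  proof (intro exI allI impI)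
    fix x :: real assume "x \<ge> N"
    note Nx = N[OF this]
    have xpos: "x > 0" using Nx by (meson exp_gt_zero less_le_trans)
    have l1: "ln x \<ge> 1" using Nx xpos by (metis ln_exp ln_le_cancel_iff exp_gt_zero)
    have ph: "phi x = exp (sqrt (ln x))" by (simp add: phi_def)
    have ph1: "phi x \<ge> 1" unfolding ph using l1 by simp
    have A: "ln x \<le> c1 * phi x" using Nx l1 unfolding ph by simp
    have B: "ln x \<le> c2 * x^2" using Nx l1 by simp
    have p4: "(2 * nn + 4) * (16800 * ln x) \<le> phi x"
      using A unfolding c1_def using nn by (simp add: field_simps)
    have "ln (4::real) = ln 2 + ln 2" using ln_mult[of 2 2] by simp
    then have "ln (4::real) \<le> 2 * ln x" using ln_2_less_1 l1 by linarith
    then have s1: "ln 4 + (2 * nn + 2) * ln x \<le> (2 * nn + 4) * ln x" by (simp add: algebra_simps)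
    have q0: "0 \<le> (2 * nn + 4) * ln x" using l1 nn by simp
    have "(2 * nn + 4) * (16800 * ln x) = 16800 * ((2 * nn + 4) * ln x)" by simp
    then have "(2 * nn + 4) * ln x \<le> phi x / 2" using p4 q0 by linarith
    then have g2: "ln 4 + (2 * nn + 2) * ln x \<le> phi x / 2" using s1 by linarith
    have "(2 * nn + 2) * ln x \<le> (2 * nn + 4) * ln x" using l1 by (intro mult_right_mono) auto
    then have "16800 * ((2 * nn + 2) * ln x) \<le> (2 * nn + 4) * (16800 * ln x)" by simp
    also have "\<dots> \<le> phi x" by (rule p4)
    also have "\<dots> \<le> (phi x)^2" using ph1 by (simp add: power2_eq_square)
    finally have g3: "16800 * ((2 * nn + 2) * ln x) \<le> (phi x)^2" .
    have g4: "8400 * ((2 * nn + 2) * ln x) \<le> x^2" using B unfolding c2_def using nn by (simp add: field_simps)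
    show "8 * sqrt 2 ^ n \<le> x \<and> exp 1 \<le> x \<and> ln 4 + (2 * nn + 2) * ln x \<le> phi x / 2 \<and>
           16800 * ((2 * nn + 2) * ln x) \<le> (phi x)^2 \<and> 8400 * ((2 * nn + 2) * ln x) \<le> x^2"
      using Nx g2 g3 g4 by blast
  qed
qed

theorem mainTheorem3:
  assumes "CARD('n) \<ge> 2"
  shows "\<exists>C>0. \<forall>(M :: 'a measure) (B :: real \<Rightarrow> 'a \<Rightarrow> real^'n) X (\<alpha>::real).
           bm_ppp M B X \<and> \<alpha> > C \<longrightarrow>
           (\<exists>E\<in>sets M. {\<omega>\<in>space M. \<not> R_ev B X \<alpha> 0 1 \<omega>} \<subseteq> E \<and>
                       measure M E \<le> \<alpha> powr (- (2 * real CARD('n) + 1)))"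
proof -
  define nn where "nn = real CARD('n)"
  have nn1: "nn \<ge> 1" using assms unfolding nn_def by simp
  obtain N where N: "\<And>x. x \<ge> N \<Longrightarrow> 8 * sqrt 2 ^ CARD('n) \<le> x \<and> exp 1 \<le> x \<and>
           ln 4 + (2 * nn + 2) * ln x \<le> phi x / 2 \<and>
           16800 * ((2 * nn + 2) * ln x) \<le> (phi x)^2 \<and>
           8400 * ((2 * nn + 2) * ln x) \<le> x^2"
    using asym[OF nn1, of "CARD('n)"] by blast
  show ?thesis
  proof (intro exI[of _ "max N 1"] conjI allI impI)
    show "0 < max N 1" by simp
    fix M :: "'a measure" and B :: "real \<Rightarrow> 'a \<Rightarrow> real^'n" and X and \<alpha> :: real
    assume h: "bm_ppp M B X \<and> max N 1 < \<alpha>"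
    have bm: "std_brownian M B" and pp: "poisson_pp M X" using h by (auto simp: bm_ppp_def)
    interpret P: prob_space M using bm by (simp add: std_brownian_def)
    have Nx: "8 * sqrt 2 ^ CARD('n) \<le> \<alpha> \<and> exp 1 \<le> \<alpha> \<and>
           ln 4 + (2 * nn + 2) * ln \<alpha> \<le> phi \<alpha> / 2 \<and>
           16800 * ((2 * nn + 2) * ln \<alpha>) \<le> (phi \<alpha>)^2 \<and>
           8400 * ((2 * nn + 2) * ln \<alpha>) \<le> \<alpha>^2" using N h by auto
    have apos: "\<alpha> > 0" using h by auto
    define l where "l = ln \<alpha>"
    have l1: "l \<ge> 1" unfolding l_def using Nx apos by (metis ln_exp ln_le_cancel_iff exp_gt_zero)
    have al: "\<alpha> = exp l" unfolding l_def using apos by simp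
    define \<epsilon> where "\<epsilon> = \<alpha> powr (- (2 * nn + 1))"
    have eps: "\<epsilon> = exp (- (2 * nn + 1) * l)" unfolding \<epsilon>_def l_def powr_def using apos by simp
    obtain EY where EY: "EY \<in> sets M" "{\<omega>\<in>space M. \<not> Y_ev B \<alpha> 0 1 \<omega>} \<subseteq> EY"
        "measure M EY \<le> \<epsilon> / 2"
      using Y_part[OF bm] Nx unfolding \<epsilon>_def nn_def by blast
    define \<phi> where "\<phi> = phi \<alpha>"
    have ph: "\<phi> = exp (sqrt l)" unfolding \<phi>_def phi_def l_def by simp
    have ph1: "\<phi> \<ge> 1" unfolding ph using l1 by simp
    have "sqrt l \<le> sqrt (l^2)" using l1 by (intro real_sqrt_le_mono) (simp add: power2_eq_square)
    then have "sqrt l \<le> l" using l1 by simp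
    then have phal: "\<phi> \<le> \<alpha>" unfolding ph al by simp
    define m where "m = nat \<lceil>\<alpha> / \<phi>\<rceil>"
    have af1: "\<alpha> / \<phi> \<ge> 1" using phal ph1 by simp
    have m1: "real m \<ge> \<alpha> / \<phi>" "real m < \<alpha> / \<phi> + 1" unfolding m_def using af1
      by (simp_all add: of_nat_nat) linarith+
    have mge: "m \<ge> 1" using m1 af1 by linarith
    have mpos: "real m > 0" using mge by simp
    have mh: "1 / real m \<le> \<phi> / \<alpha>" using m1 apos ph1 mpos by (simp add: field_simps)
    obtain EN where EN: "EN \<in> sets M" "{\<omega>\<in>space M. \<not> N_ev X \<alpha> 0 1 \<omega>} \<subseteq> EN"
        "measure M EN \<le> real m * exp (- \<alpha> / real m)"
      using N_part[OF pp apos mge] mh unfolding \<phi>_def by blast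
    have "2 * \<alpha> / \<phi> = \<alpha> / \<phi> + \<alpha> / \<phi>" by simp
    then have m2: "real m \<le> 2 * \<alpha> / \<phi>" using m1 af1 by linarith
    have "\<phi> / 2 \<le> \<alpha> / real m"
    proof -
      have "\<phi> * real m \<le> 2 * \<alpha>" using m2 ph1 by (simp add: field_simps)
      then show ?thesis using mpos by (simp add: field_simps)
    qed
    then have ex1: "exp (- \<alpha> / real m) \<le> exp (- \<phi> / 2)" by simp
    have "real m * exp (- \<alpha> / real m) \<le> (2 * \<alpha>) * exp (- \<phi> / 2)"
    proof (rule mult_mono[OF _ ex1])
      have "2 * \<alpha> / \<phi> \<le> 2 * \<alpha>" using ph1 apos by (simp add: field_simps)
      then show "real m \<le> 2 * \<alpha>" using m2 by linarith
    qed (use apos in auto)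
    also have "exp (- \<phi> / 2) \<le> exp (- (ln 4 + (2 * nn + 2) * l))"
      using Nx unfolding \<phi>_def l_def by simp
    then have "(2 * \<alpha>) * exp (- \<phi> / 2) \<le> (2 * \<alpha>) * exp (- (ln 4 + (2 * nn + 2) * l))"
      using apos by (intro mult_left_mono) auto
    also have "(2 * \<alpha>) * exp (- (ln 4 + (2 * nn + 2) * l)) = 2 * exp (- ln 4) * exp (- (2 * nn + 1) * l)"
      unfolding al by (simp flip: exp_add add: algebra_simps)
    also have "\<dots> = \<epsilon> / 2" unfolding eps by (simp add: exp_minus)
    finally have mEN: "measure M EN \<le> \<epsilon> / 2" using EN(3) by linarith
    show "\<exists>E\<in>sets M. {\<omega>\<in>space M. \<not> R_ev B X \<alpha> 0 1 \<omega>} \<subseteq> E \<and>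
                       measure M E \<le> \<alpha> powr (- (2 * real CARD('n) + 1))"
    proof (intro bexI[of _ "EN \<union> EY"] conjI)
      show "EN \<union> EY \<in> sets M" using EN EY by auto
      show "{\<omega>\<in>space M. \<not> R_ev B X \<alpha> 0 1 \<omega>} \<subseteq> EN \<union> EY"
        using EN(2) EY(2) unfolding R_ev_def by auto
      have "measure M (EN \<union> EY) \<le> measure M EN + measure M EY"
        using EN(1) EY(1) by (intro measure_subadditive) auto
      also have "\<dots> \<le> \<epsilon>" using mEN EY(3) by linarith
      finally show "measure M (EN \<union> EY) \<le> \<alpha> powr (- (2 * real CARD('n) + 1))"
        unfolding \<epsilon>_def nn_def .
    qed
  qed
qed

end
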